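(* Let $\mathcal{I}$ be an ideal of the multiloop algebra $\mathcal{L}$, and let $Y=\sum_{\bar r\in G}\sum_{n=1}^{\dim\mathfrak{g}_{\bar r}} x_{\bar r n}\otimes \pi_{\bar r n}(Y)\in\mathcal{I}$. Then $$x_{\bar k i}\otimes t^{k-\ell}\pi_{\bar\ell j}(Y)\in\mathcal{I}$$ for all $k,\ell\in\mathbb{Z}^N$, $1\le i\le \dim\mathfrak{g}_{\bar k}$ and $1\le j\le\dim\mathfrak{g}_{\bar\ell}$.
   Context: $F$ is an algebraically closed field of characteristic zero; $\mathfrak{g}$ is a finite-dimensional simple Lie algebra over $F$; $\sigma_1,\dots,\sigma_N$ are pairwise commuting automorphisms of $\mathfrak{g}$ of finite orders $m_1,\dots,m_N$; for each $i$, $\xi_i\in F$ is a fixed primitive $m_i$-th root of unity. Let $G=\mathbb{Z}/m_1\mathbb{Z}\times\cdots\times\mathbb{Z}/m_N\mathbb{Z}$ and write $\bar k$ for the image of $k\in\mathbb{Z}^N$ in $G$. Set $\mathfrak{g}_{\bar k}=\{x\in\mathfrak{g}: \sigma_i x=\xi_i^{k_i}x \text{ for } i=1,\dots,N\}$, so $\mathfrak{g}=\bigoplus_{\bar k\in G}\mathfrak{g}_{\bar k}$. Let $R=F[t_1^{\pm1},\dots,t_N^{\pm1}]$, $t^k=t_1^{k_1}\cdots t_N^{k_N}$, $R_{\bar 0}=F[t_1^{\pm m_1},\dots,t_N^{\pm m_N}]$ and $R_{\bar k}=t^kR_{\bar 0}$ (so $R=\bigoplus_{\bar k\in G}R_{\bar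 k}$). The multiloop algebra is $\mathcal{L}=\mathcal{L}(\mathfrak{g};\sigma_1,\dots,\sigma_N)=\bigoplus_{k\in\mathbb{Z}^N}\mathfrak{g}_{\bar k}\otimes Ft^k=\bigoplus_{\bar k\in G}\mathfrak{g}_{\bar k}\otimes R_{\bar k}\subseteq \mathfrak{g}\otimes R$, with bracket $[x\otimes f,y\otimes g]=[x,y]\otimes fg$. For each $\bar k\in G$ fix a basis $\{x_{\bar k j}: j=1,\dots,\dim\mathfrak{g}_{\bar k}\}$ of $\mathfrak{g}_{\bar k}$, so $\mathcal{L}=\bigoplus_{\bar k}\bigoplus_j Fx_{\bar kj}\otimes R_{\bar k}$; let $\pi_{\bar kj}:\mathcal{L}\to R_{\bar k}$ be the projection onto the summand $Fx_{\bar kj}\otimes R_{\bar k}$ followed by the identification $x_{\bar kj}\otimes f\mapsto f$. *)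

theory Defs
  imports Main "HOL-Library.Poly_Mapping" "HOL-Library.Function_Algebras"
    "HOL-Computational_Algebra.Polynomial"
begin

definition alg_closed :: "'f::field itself \<Rightarrow> bool" where
  "alg_closed _ \<longleftrightarrow> (\<forall>p::'f poly. degree p > 0 \<longrightarrow> (\<exists>x. poly p x = 0))"

definition lie_algebra :: "('f::field \<Rightarrow> 'g::ab_group_add \<Rightarrow> 'g) \<Rightarrow> ('g \<Rightarrow> 'g \<Rightarrow> 'g) \<Rightarrow> bool" where
  "lie_algebra scale br \<longleftrightarrow> vector_space scale
     \<and> (\<forall>x y z. br (x + y) z = br x z + br y z)
     \<and> (\<forall>x y z. br x (y + z) = br x y + br x z)
     \<and> (\<forall>c x y. br (scale c x) y = scale c (br x y))
     \<and> (\<forall>c x y. br x (scale c y) = scale c (br x y))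
     \<and> (\<forall>x. br x x = 0)
     \<and> (\<forall>x y z. br x (br y z) + br y (br z x) + br z (br x y) = 0)"

definition lie_ideal :: "('f::field \<Rightarrow> 'g::ab_group_add \<Rightarrow> 'g) \<Rightarrow> ('g \<Rightarrow> 'g \<Rightarrow> 'g) \<Rightarrow> 'g set \<Rightarrow> bool" where
  "lie_ideal scale br I \<longleftrightarrow> module.subspace scale I \<and> (\<forall>x y. y \<in> I \<longrightarrow> br x y \<in> I)"

definition simple_lie_algebra :: "('f::field \<Rightarrow> 'g::ab_group_add \<Rightarrow> 'g) \<Rightarrow> ('g \<Rightarrow> 'g \<Rightarrow> 'g) \<Rightarrow> bool" where
  "simple_lie_algebra scale br \<longleftrightarrow> lie_algebra scale br
     \<and> (\<exists>B. finite B \<and> module.span scale B = UNIV)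
     \<and> (\<exists>x y. br x y \<noteq> 0)
     \<and> (\<forall>I. lie_ideal scale br I \<longrightarrow> I = {0} \<or> I = UNIV)"

definition lie_aut :: "('f::field \<Rightarrow> 'g::ab_group_add \<Rightarrow> 'g) \<Rightarrow> ('g \<Rightarrow> 'g \<Rightarrow> 'g) \<Rightarrow> ('g \<Rightarrow> 'g) \<Rightarrow> bool" where
  "lie_aut scale br s \<longleftrightarrow> bij s \<and> module_hom scale scale s \<and> (\<forall>x y. s (br x y) = br (s x) (s y))"

definition has_order :: "('g \<Rightarrow> 'g) \<Rightarrow> nat \<Rightarrow> bool" where
  "has_order s m \<longleftrightarrow> m > 0 \<and> (s ^^ m) = id \<and> (\<forall>d. 0 < d \<and> d < m \<longrightarrow> (s ^^ d) \<noteq> id)"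

definition primitive_root :: "'f::field \<Rightarrow> nat \<Rightarrow> bool" where
  "primitive_root z m \<longleftrightarrow> m > 0 \<and> z ^ m = 1 \<and> (\<forall>d. 0 < d \<and> d < m \<longrightarrow> z ^ d \<noteq> 1)"

text \<open>The image \<open>k bar\<close> of k in G, represented by its normalized representative.\<close>
definition gbar :: "('n \<Rightarrow> nat) \<Rightarrow> ('n \<Rightarrow> int) \<Rightarrow> ('n \<Rightarrow> int)" where
  "gbar m k = (\<lambda>i. k i mod int (m i))"

definition Gset :: "('n \<Rightarrow> nat) \<Rightarrow> ('n \<Rightarrow> int) set" where
  "Gset m = {r. \<forall>i. 0 \<le> r i \<and> r i < int (m i)}"

definition gcomp :: "('f::field \<Rightarrow> 'g::ab_group_add \<Rightarrow> 'g) \<Rightarrow> ('n \<Rightarrow> 'g \<Rightarrow> 'g) \<Rightarrow> ('n \<Rightarrow> 'f)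
    \<Rightarrow> ('n \<Rightarrow> nat) \<Rightarrow> ('n \<Rightarrow> int) \<Rightarrow> 'g set" where
  "gcomp scale sigma xi m k = {x. \<forall>i. sigma i x = scale (xi i ^ nat (k i mod int (m i))) x}"

text \<open>g \<otimes> R with R = F[t_i^{\<pm>1}] is modelled as finitely supported maps Z^N \<rightarrow> g,
  X = \<Sum>_k X(k) \<otimes> t^k.  Laurent polynomials R are finitely supported maps Z^N \<rightarrow> F.\<close>
definition tens :: "('f::field \<Rightarrow> 'g::ab_group_add \<Rightarrow> 'g) \<Rightarrow> 'g \<Rightarrow> (('n \<Rightarrow> int) \<Rightarrow>\<^sub>0 'f) \<Rightarrow> ('n \<Rightarrow> int) \<Rightarrow>\<^sub>0 'g" where
  "tens scale x f = Poly_Mapping.map (\<lambda>c. scale c x) f"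

definition tpow :: "('n \<Rightarrow> int) \<Rightarrow> ('n \<Rightarrow> int) \<Rightarrow>\<^sub>0 'f::field" where
  "tpow k = Poly_Mapping.single k 1"

definition lbr :: "('g::ab_group_add \<Rightarrow> 'g \<Rightarrow> 'g) \<Rightarrow> (('n \<Rightarrow> int) \<Rightarrow>\<^sub>0 'g) \<Rightarrow> (('n \<Rightarrow> int) \<Rightarrow>\<^sub>0 'g) \<Rightarrow> ('n \<Rightarrow> int) \<Rightarrow>\<^sub>0 'g" where
  "lbr br X Y = (\<Sum>a\<in>Poly_Mapping.keys X. \<Sum>b\<in>Poly_Mapping.keys Y. Poly_Mapping.single (a + b) (br (Poly_Mapping.lookup X a) (Poly_Mapping.lookup Y b)))"

definition lsmul :: "('f::field \<Rightarrow> 'g::ab_group_add \<Rightarrow> 'g) \<Rightarrow> 'f \<Rightarrow> (('n \<Rightarrow> int) \<Rightarrow>\<^sub>0 'g) \<Rightarrow> ('n \<Rightarrow> int) \<Rightarrow>\<^sub>0 'g" where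
  "lsmul scale c X = Poly_Mapping.map (scale c) X"

definition multiloop :: "('f::field \<Rightarrow> 'g::ab_group_add \<Rightarrow> 'g) \<Rightarrow> ('n \<Rightarrow> 'g \<Rightarrow> 'g) \<Rightarrow> ('n \<Rightarrow> 'f)
    \<Rightarrow> ('n \<Rightarrow> nat) \<Rightarrow> (('n \<Rightarrow> int) \<Rightarrow>\<^sub>0 'g) set" where
  "multiloop scale sigma xi m = {X. \<forall>k. Poly_Mapping.lookup X k \<in> gcomp scale sigma xi m k}"

definition loop_ideal :: "('f::field \<Rightarrow> 'g::ab_group_add \<Rightarrow> 'g) \<Rightarrow> ('g \<Rightarrow> 'g \<Rightarrow> 'g) \<Rightarrow> ('n \<Rightarrow> 'g \<Rightarrow> 'g)
    \<Rightarrow> ('n \<Rightarrow> 'f) \<Rightarrow> ('n \<Rightarrow> nat) \<Rightarrow> (('n \<Rightarrow> int) \<Rightarrow>\<^sub>0 'g) set \<Rightarrow> bool" where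
  "loop_ideal scale br sigma xi m I \<longleftrightarrow> I \<subseteq> multiloop scale sigma xi m \<and> 0 \<in> I
     \<and> (\<forall>X\<in>I. \<forall>Y\<in>I. X + Y \<in> I) \<and> (\<forall>c. \<forall>X\<in>I. lsmul scale c X \<in> I)
     \<and> (\<forall>X\<in>multiloop scale sigma xi m. \<forall>Y\<in>I. lbr br X Y \<in> I)"

text \<open>projection pi_{r j}: L \<rightarrow> R_r (r a normalized representative in G, j < dim g_r, 0-based)\<close>
definition proj :: "('f::field \<Rightarrow> 'g::ab_group_add \<Rightarrow> 'g) \<Rightarrow> ('n \<Rightarrow> nat) \<Rightarrow> (('n \<Rightarrow> int) \<Rightarrow> nat \<Rightarrow> 'g)
    \<Rightarrow> (('n \<Rightarrow> int) \<Rightarrow> nat) \<Rightarrow> ('n \<Rightarrow> int) \<Rightarrow> nat \<Rightarrow> (('n \<Rightarrow> int) \<Rightarrow>\<^sub>0 'g) \<Rightarrow> ('n \<Rightarrow> int) \<Rightarrow>\<^sub>0 'f" where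
  "proj scale m xb d r j X = Poly_Mapping.mapp
     (\<lambda>k v. if gbar m k = r then module.representation scale (xb r ` {..<d r}) v (xb r j) else 0) X"

end

theory Submission
  imports Defs "HOL-Library.FuncSet"
begin


locale LA = vector_space scale for scale :: "'f::field \<Rightarrow> 'g::ab_group_add \<Rightarrow> 'g" +
  fixes br :: "'g \<Rightarrow> 'g \<Rightarrow> 'g"
  assumes simple: "simple_lie_algebra scale br"
    and ac: "alg_closed TYPE('f)"
begin

definition lin :: "('g \<Rightarrow> 'g) \<Rightarrow> bool" where
  "lin a \<longleftrightarrow> (\<forall>x y. a (x+y) = a x + a y) \<and> (\<forall>c x. a (scale c x) = scale c (a x))"

lemma lin_hom: "lin a \<Longrightarrow> module_hom scale scale a"
  unfolding lin_def module_hom_iff using module_axioms by auto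

lemma lin_0: "lin a \<Longrightarrow> a 0 = 0" using module_hom.zero[OF lin_hom] .
lemma lin_add: "lin a \<Longrightarrow> a (x + y) = a x + a y" unfolding lin_def by auto
lemma lin_scale: "lin a \<Longrightarrow> a (scale c x) = scale c (a x)" unfolding lin_def by auto
lemma lin_diff: "lin a \<Longrightarrow> a (x - y) = a x - a y" using module_hom.diff[OF lin_hom] .
lemma lin_sum: "lin a \<Longrightarrow> a (sum g S) = (\<Sum>x\<in>S. a (g x))" using module_hom.sum[OF lin_hom] .

lemma lie: "lie_algebra scale br" using simple unfolding simple_lie_algebra_def by auto
lemma br_add_l: "br (x + y) z = br x z + br y z" using lie unfolding lie_algebra_def by auto
lemma br_add_r: "br x (y + z) = br x y + br x z" using lie unfolding lie_algebra_def by auto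
lemma br_scale_l: "br (scale c x) y = scale c (br x y)" using lie unfolding lie_algebra_def by auto
lemma br_scale_r: "br x (scale c y) = scale c (br x y)" using lie unfolding lie_algebra_def by auto
lemma br_0_l[simp]: "br 0 y = 0" using br_scale_l[of 0 0 y] by simp
lemma br_0_r[simp]: "br x 0 = 0" using br_scale_r[of x 0 0] by simp
lemma lin_br: "lin (br x)" unfolding lin_def by (simp add: br_add_r br_scale_r)
lemma findim: "\<exists>B. finite B \<and> span B = UNIV" using simple unfolding simple_lie_algebra_def by auto
lemma nonab: "\<exists>x y. br x y \<noteq> 0" using simple unfolding simple_lie_algebra_def by auto
lemma ideals: "lie_ideal scale br I \<Longrightarrow> I = {0} \<or> I = UNIV"
  using simple unfolding simple_lie_algebra_def by auto

lemma lin_comp: "lin a \<Longrightarrow> lin b \<Longrightarrow> lin (\<lambda>v. a (b v))" unfolding lin_def by auto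

lemma lin_eq_span:
  assumes "lin a" "lin b" "\<And>x. x \<in> B \<Longrightarrow> a x = b x" "u \<in> span B"
  shows "a u = b u"
  using assms(4)
proof (induction rule: span_induct)
  case base
  show ?case unfolding subspace_def
    by (auto simp: lin_0[OF assms(1)] lin_add[OF assms(1)] lin_scale[OF assms(1)]
         lin_0[OF assms(2)] lin_add[OF assms(2)] lin_scale[OF assms(2)])
next
  case (step x) then show ?case using assms(3) by simp
qed
lemma lin_plus: "lin a \<Longrightarrow> lin b \<Longrightarrow> lin (\<lambda>v. a v + b v)" unfolding lin_def
  by (auto simp: algebra_simps)
lemma lin_smul: "lin a \<Longrightarrow> lin (\<lambda>v. scale c (a v))" unfolding lin_def
  by (auto simp: algebra_simps)

section \<open>polynomial evaluation\<close>

definition pe :: "('g\<Rightarrow>'g) \<Rightarrow> 'f poly \<Rightarrow> 'g \<Rightarrow> 'g" where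
  "pe f p w = (\<Sum>i\<le>degree p. scale (coeff p i) ((f^^i) w))"

lemma pe_bound: "degree p \<le> n \<Longrightarrow> pe f p w = (\<Sum>i\<le>n. scale (coeff p i) ((f^^i) w))"
  unfolding pe_def by (rule sum.mono_neutral_left) (auto simp: coeff_eq_0)

lemma pe_add: "pe f (p + q) w = pe f p w + pe f q w"
proof -
  let ?n = "max (degree p) (degree q)"
  have "degree (p+q) \<le> ?n" by (rule degree_add_le) auto
  then show ?thesis
    by (simp add: pe_bound[of _ ?n] sum.distrib scale_left_distrib)
qed

lemma pe_smult: "pe f (smult c p) w = scale c (pe f p w)"
  by (simp add: pe_bound[of _ "degree p"] degree_smult_le scale_sum_right)

lemma pe_zero[simp]: "pe f 0 w = 0" by (simp add: pe_def)

lemma pe_pCons: assumes "lin f" shows "pe f (pCons a p) w = scale a w + f (pe f p w)"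
proof -
  have "pe f (pCons a p) w = (\<Sum>i\<le>Suc (degree p). scale (coeff (pCons a p) i) ((f^^i) w))"
    by (rule pe_bound) (simp add: degree_pCons_le)
  also have "\<dots> = scale a w + (\<Sum>i\<le>degree p. scale (coeff p i) (f ((f^^i) w)))"
    by (subst sum.atMost_Suc_shift) simp
  also have "\<dots> = scale a w + f (pe f p w)"
    by (simp add: pe_def lin_sum[OF assms] lin_scale[OF assms])
  finally show ?thesis .
qed

lemma pe_mult: assumes "lin f" shows "pe f (p * q) w = pe f p (pe f q w)"
proof (induction p)
  case 0 then show ?case by simp
next
  case (pCons a p)
  have "pe f (pCons a p * q) w = scale a (pe f q w) + pe f (pCons 0 (p*q)) w"
    by (simp add: pe_add pe_smult)
  also have "\<dots> = scale a (pe f q w) + f (pe f p (pe f q w))"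
    by (simp add: pe_pCons[OF assms] pCons.IH)
  also have "\<dots> = pe f (pCons a p) (pe f q w)" by (simp add: pe_pCons[OF assms])
  finally show ?case .
qed

lemma pe_monom: "pe f (monom c k) w = scale c ((f^^k) w)"
proof -
  have "pe f (monom c k) w = (\<Sum>i\<le>k. scale (coeff (monom c k) i) ((f^^i) w))"
    by (rule pe_bound) (simp add: degree_monom_le)
  also have "\<dots> = (\<Sum>i\<le>k. if i = k then scale c ((f^^k) w) else 0)"
    by (rule sum.cong) auto
  finally show ?thesis by simp
qed

lemma pe_diff: "pe f (p - q) w = pe f p w - pe f q w"
proof -
  let ?n = "max (degree p) (degree q)"
  have "degree (p-q) \<le> ?n" by (rule degree_diff_le) auto
  then show ?thesis
    by (simp add: pe_bound[of _ ?n] sum_subtractf scale_left_diff_distrib)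
qed

lemma pe_sum: "pe f (\<Sum>i\<in>S. p i) w = (\<Sum>i\<in>S. pe f (p i) w)"
  by (induction S rule: infinite_finite_induct) (auto simp: pe_add)

lemma pe_const: "pe f [:c:] w = scale c w" by (simp add: pe_def)

lemma annih_poly:
  assumes "finite B" "span B = UNIV"
  shows "\<exists>p. p \<noteq> 0 \<and> pe f p v = 0"
proof -
  define n where "n = card B"
  define g where "g i = (f^^i) v" for i
  show ?thesis
  proof (cases "inj_on g {..n}")
    case False
    then have "\<exists>i\<in>{..n}. \<exists>j\<in>{..n}. g i = g j \<and> i \<noteq> j" unfolding inj_on_def by blast
    then obtain i j where ij: "i \<le> n" "j \<le> n" "i \<noteq> j" "g i = g j" by blast
    define p where "p = monom (1::'f) j - monom 1 i"
    have "coeff p j \<noteq> 0" using ij by (simp add: p_def)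
    then have "p \<noteq> 0" by auto
    moreover have "pe f p v = g j - g i" by (simp add: p_def pe_diff pe_monom g_def)
    then have "pe f p v = 0" using ij(4) by simp
    ultimately show ?thesis by blast
  next
    case True
    define S where "S = g ` {..n}"
    have cS: "card S = Suc n" using True by (simp add: S_def card_image)
    have "dependent S"
    proof (rule ccontr)
      assume "\<not> dependent S"
      have "S \<subseteq> span B" using assms(2) by simp
      then have "card S \<le> card B" using independent_span_bound[OF assms(1) \<open>\<not> dependent S\<close>] by simp
      then show False using cS n_def by simp
    qed
    have fS: "finite S" unfolding S_def by simp
    obtain u where u: "\<exists>x\<in>S. u x \<noteq> 0" "(\<Sum>x\<in>S. scale (u x) x) = 0"
      using dependent_finite[OF fS] \<open>dependent S\<close> by blast
    define p where "p = (\<Sum>i\<le>n. monom (u (g i)) i)"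
    have cp: "coeff p j = u (g j)" if "j \<le> n" for j
      using that by (simp add: p_def coeff_sum)
    obtain j where j: "j \<le> n" "u (g j) \<noteq> 0" using u(1) unfolding S_def by auto
    have "p \<noteq> 0"
    proof
      assume "p = 0"
      then have "coeff p j = 0" by simp
      then show False using cp[OF j(1)] j(2) by simp
    qed
    have "pe f p v = (\<Sum>i\<le>n. scale (u (g i)) (g i))"
      by (simp add: p_def pe_sum pe_monom g_def)
    also have "\<dots> = (\<Sum>x\<in>S. scale (u x) x)" unfolding S_def
      by (subst sum.reindex[OF True]) simp
    finally have "pe f p v = 0" using u(2) by simp
    then show ?thesis using \<open>p \<noteq> 0\<close> by blast
  qed
qed

lemma eigen_aux:
  assumes "lin f"
  shows "degree p = n \<Longrightarrow> p \<noteq> 0 \<Longrightarrow> pe f p v = 0 \<Longrightarrow> v \<noteq> 0 \<Longrightarrow> \<exists>c w. w \<noteq> 0 \<and> f w = scale c w"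
proof (induction n arbitrary: p v rule: less_induct)
  case (less n)
  show ?case
  proof (cases "n = 0")
    case True
    then have "p = [:coeff p 0:]" using degree_0_id less.prems(1) by metis
    then have "scale (coeff p 0) v = 0" using less.prems(3) pe_const by metis
    moreover have "coeff p 0 \<noteq> 0" using \<open>p = _\<close> less.prems(2) by auto
    ultimately show ?thesis using less.prems(4) by simp
  next
    case False
    then obtain x where "poly p x = 0" using ac less.prems(1) unfolding alg_closed_def by auto
    then obtain q where pq: "p = [:-x,1:] * q" using poly_eq_0_iff_dvd by (metis dvdE)
    have "q \<noteq> 0" using pq less.prems(2) by auto
    have "degree p = degree [:-x,1:] + degree q" unfolding pq
      by (rule degree_mult_eq) (auto simp: \<open>q \<noteq> 0\<close>)
    then have dq: "degree q < n" using less.prems(1) by simp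
    define u where "u = pe f q v"
    have "pe f p v = pe f [:-x,1:] u" unfolding pq u_def by (rule pe_mult[OF assms])
    also have "\<dots> = scale (-x) u + f u"
      using pe_pCons[OF assms, of "-x" "[:1:]" u] pe_const[of f 1 u] by simp
    finally have "pe f p v = scale (-x) u + f u" .
    then have fu: "f u = scale x u" using less.prems(3) by (simp add: add_eq_0_iff)
    show ?thesis
    proof (cases "u = 0")
      case True
      show ?thesis using less.IH[OF dq refl \<open>q\<noteq>0\<close> _ less.prems(4)] True u_def by auto
    next
      case False then show ?thesis using fu by blast
    qed
  qed
qed

lemma eigen:
  fixes v :: 'g
  assumes "lin f" "v \<noteq> 0"
  shows "\<exists>c w. w \<noteq> 0 \<and> f w = scale c w"
proof -
  obtain B where "finite B" "span B = UNIV" using findim by auto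
  then obtain p where "p \<noteq> 0" "pe f p v = 0" using annih_poly by blast
  then show ?thesis using eigen_aux[OF assms(1) refl] assms(2) by blast
qed

section \<open>associative algebra generated by ad\<close>

inductive_set Alg :: "('g \<Rightarrow> 'g) set" where
  Alg_br: "br x \<in> Alg"
| Alg_plus: "a \<in> Alg \<Longrightarrow> b \<in> Alg \<Longrightarrow> (\<lambda>v. a v + b v) \<in> Alg"
| Alg_smul: "a \<in> Alg \<Longrightarrow> (\<lambda>v. scale c (a v)) \<in> Alg"
| Alg_comp: "a \<in> Alg \<Longrightarrow> b \<in> Alg \<Longrightarrow> a \<circ> b \<in> Alg"

lemma Alg_lin: "a \<in> Alg \<Longrightarrow> lin a"
proof (induction rule: Alg.induct)
  case (Alg_br x) show ?case by (rule lin_br)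
next
  case (Alg_plus a b) then show ?case using lin_plus by blast
next
  case (Alg_smul a c) then show ?case using lin_smul by blast
next
  case (Alg_comp a b) then show ?case unfolding comp_def using lin_comp by blast
qed

lemma Alg_comp': "a \<in> Alg \<Longrightarrow> b \<in> Alg \<Longrightarrow> (\<lambda>v. a (b v)) \<in> Alg"
  using Alg_comp[of a b] by (simp add: comp_def)

lemma Alg_zero: "(\<lambda>v. 0) \<in> Alg"
proof -
  have "br 0 = (\<lambda>v. 0)" by auto
  then show ?thesis using Alg_br[of 0] by simp
qed

lemma Alg_diff: "a \<in> Alg \<Longrightarrow> b \<in> Alg \<Longrightarrow> (\<lambda>v. a v - b v) \<in> Alg"
  using Alg_plus[of a "\<lambda>v. scale (-1) (b v)"] Alg_smul[of b "-1"] by simp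

lemma Alg_sum: "finite S \<Longrightarrow> (\<And>s. s \<in> S \<Longrightarrow> A s \<in> Alg) \<Longrightarrow> (\<lambda>v. \<Sum>s\<in>S. A s v) \<in> Alg"
  by (induction S rule: finite_induct) (auto intro: Alg_zero Alg_plus)

lemma lie_idealI:
  assumes "0 \<in> S" "\<And>x y. x \<in> S \<Longrightarrow> y \<in> S \<Longrightarrow> x + y \<in> S"
    "\<And>c x. x \<in> S \<Longrightarrow> scale c x \<in> S" "\<And>x y. y \<in> S \<Longrightarrow> br x y \<in> S"
  shows "lie_ideal scale br S"
  unfolding lie_ideal_def subspace_def using assms by auto

lemma orbit:
  assumes "y \<noteq> 0" shows "\<exists>a\<in>Alg. a y = w"
proof -
  define Orb where "Orb = {a y | a. a \<in> Alg}"
  have "lie_ideal scale br Orb" unfolding Orb_def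
  proof (rule lie_idealI)
    show "0 \<in> {a y |a. a \<in> Alg}" using Alg_zero by force
    show "x + z \<in> {a y |a. a \<in> Alg}" if "x \<in> {a y |a. a \<in> Alg}" "z \<in> {a y |a. a \<in> Alg}" for x z
      using that Alg_plus by force
    show "scale c x \<in> {a y |a. a \<in> Alg}" if "x \<in> {a y |a. a \<in> Alg}" for c x
      using that Alg_smul by force
    show "br x z \<in> {a y |a. a \<in> Alg}" if zin: "z \<in> {a y |a. a \<in> Alg}" for x z
    proof -
      obtain a where "a \<in> Alg" "z = a y" using zin by auto
      then show ?thesis using Alg_comp'[OF Alg_br[of x] \<open>a \<in> Alg\<close>]
        by (auto intro!: exI[of _ "\<lambda>v. br x (a v)"])
    qed
  qed
  moreover have "Orb \<noteq> {0}"
  proof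
    assume O0: "Orb = {0}"
    define Z where "Z = {z. \<forall>x. br x z = 0}"
    have "lie_ideal scale br Z" unfolding Z_def
      by (rule lie_idealI) (auto simp: br_add_r br_scale_r)
    moreover have "y \<in> Z" using O0 Alg_br unfolding Z_def Orb_def by blast
    ultimately have "Z = UNIV" using ideals assms by blast
    then show False using nonab unfolding Z_def by auto
  qed
  ultimately have "Orb = UNIV" using ideals by blast
  then have "w \<in> Orb" by simp
  then show ?thesis unfolding Orb_def by blast
qed

lemma Alg_vanish_span:
  assumes "a \<in> Alg" "\<And>x. x \<in> F \<Longrightarrow> a x = 0" "u \<in> span F"
  shows "a u = 0"
  using lin_eq_span[OF Alg_lin[OF assms(1)] Alg_lin[OF Alg_zero] _ assms(3)]
    assms(2) by auto

lemma core:
  assumes "finite F" shows "v \<notin> span F \<Longrightarrow> \<exists>a\<in>Alg. (\<forall>u\<in>F. a u = 0) \<and> a v \<noteq> 0"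
  using assms
proof (induction F arbitrary: v rule: finite_induct)
  case empty
  then have "v \<noteq> 0" by simp
  then obtain a where "a \<in> Alg" "a v = v" using orbit by blast
  then show ?case using \<open>v \<noteq> 0\<close> by (intro bexI[of _ a]) auto
next
  case (insert u F)
  have "span F \<subseteq> span (insert u F)" by (rule span_mono) auto
  then have vF: "v \<notin> span F" using insert.prems by blast
  show ?case
  proof (cases "u \<in> span F")
    case True
    obtain a where "a \<in> Alg" "\<forall>x\<in>F. a x = 0" "a v \<noteq> 0" using insert.IH[OF vF] by auto
    moreover have "a u = 0" using Alg_vanish_span[OF \<open>a \<in> Alg\<close> _ True] calculation by auto
    ultimately show ?thesis by auto
  next
    case False
    obtain a0 where a0: "a0 \<in> Alg" "\<forall>x\<in>F. a0 x = 0" "a0 u \<noteq> 0" using insert.IH[OF False] by auto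
    define J where "J = {a\<in>Alg. \<forall>x\<in>F. a x = 0}"
    have J_plus: "(\<lambda>v. a v + b v) \<in> J" if "a \<in> J" "b \<in> J" for a b
      using that Alg_plus unfolding J_def by auto
    have J_smul: "(\<lambda>v. scale c (a v)) \<in> J" if "a \<in> J" for a c
      using that Alg_smul unfolding J_def by auto
    have J_diff: "(\<lambda>v. a v - b v) \<in> J" if "a \<in> J" "b \<in> J" for a b
      using that Alg_diff unfolding J_def by auto
    have J_comp: "(\<lambda>v. br x (a v)) \<in> J" if "a \<in> J" for a x
      using that Alg_comp'[OF Alg_br] unfolding J_def by auto
    have J_zero: "(\<lambda>v. 0) \<in> J" using Alg_zero unfolding J_def by auto
    have J_lin: "lin a" if "a \<in> J" for a using that Alg_lin unfolding J_def by auto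
    show ?thesis
    proof (rule ccontr)
      assume "\<not> ?thesis"
      then have H: "a v = 0" if "a \<in> J" "a u = 0" for a
        using that unfolding J_def by auto
      define Ju where "Ju = {a u | a. a \<in> J}"
      have "lie_ideal scale br Ju" unfolding Ju_def
      proof (rule lie_idealI)
        show "0 \<in> {a u |a. a \<in> J}" using J_zero by force
        show "x + z \<in> {a u |a. a \<in> J}" if "x \<in> {a u |a. a \<in> J}" "z \<in> {a u |a. a \<in> J}" for x z
          using that J_plus by force
        show "scale c x \<in> {a u |a. a \<in> J}" if "x \<in> {a u |a. a \<in> J}" for c x
          using that J_smul by force
        show "br x z \<in> {a u |a. a \<in> J}" if zin: "z \<in> {a u |a. a \<in> J}" for x z
        proof -
          obtain a where "a \<in> J" "z = a u" using zin by auto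
          then show ?thesis using J_comp[OF \<open>a \<in> J\<close>, of x]
            by (auto intro!: exI[of _ "\<lambda>v. br x (a v)"])
        qed
      qed
      moreover have "a0 u \<in> Ju" using a0 unfolding Ju_def J_def by auto
      ultimately have "Ju = UNIV" using ideals a0(3) by blast
      have surj: "\<exists>a\<in>J. a u = w" for w
      proof -
        have "w \<in> Ju" using \<open>Ju = UNIV\<close> by simp
        then show ?thesis unfolding Ju_def by blast
      qed
      define f where "f w = (SOME a. a \<in> J \<and> a u = w) v" for w
      have key: "f (a u) = a v" if "a \<in> J" for a
      proof -
        define a' where "a' = (SOME a'. a' \<in> J \<and> a' u = a u)"
        have "\<exists>a'. a' \<in> J \<and> a' u = a u" using that by blast
        then have "a' \<in> J \<and> a' u = a u" unfolding a'_def by (rule someI_ex)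
        then have a': "a' \<in> J" "a' u = a u" "f (a u) = a' v" unfolding f_def a'_def by auto
        have "(\<lambda>x. a' x - a x) v = 0"
          by (rule H) (auto intro: J_diff a' that)
        then show ?thesis using a' by simp
      qed
      have "lin f" unfolding lin_def
      proof safe
        fix x y
        obtain a b where "a \<in> J" "a u = x" "b \<in> J" "b u = y" using surj by metis
        then show "f (x + y) = f x + f y"
          using key[OF J_plus[of a b]] key by auto
      next
        fix c x
        obtain a where "a \<in> J" "a u = x" using surj by metis
        then show "f (scale c x) = scale c (f x)"
          using key[OF J_smul[of a c]] key by auto
      qed
      have comm: "f (br x w) = br x (f w)" for x w
      proof -
        obtain a where "a \<in> J" "a u = w" using surj by metis
        then show ?thesis using key[OF J_comp[of a x]] key by auto
      qed
      obtain c w0 where w0: "w0 \<noteq> 0" "f w0 = scale c w0" using eigen[OF \<open>lin f\<close> a0(3)] by auto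
      define K where "K = {w. f w = scale c w}"
      have "lie_ideal scale br K" unfolding K_def
      proof (rule lie_idealI)
        show "0 \<in> {w. f w = scale c w}" using lin_0[OF \<open>lin f\<close>] by simp
        show "x + y \<in> {w. f w = scale c w}" if "x \<in> {w. f w = scale c w}" "y \<in> {w. f w = scale c w}" for x y
          using that by (simp add: lin_add[OF \<open>lin f\<close>] scale_right_distrib)
        show "scale d x \<in> {w. f w = scale c w}" if "x \<in> {w. f w = scale c w}" for d x
          using that by (simp add: lin_scale[OF \<open>lin f\<close>] mult.commute)
        show "br x y \<in> {w. f w = scale c w}" if "y \<in> {w. f w = scale c w}" for x y
          using that by (simp add: comm br_scale_r)
      qed
      moreover have "w0 \<in> K" using w0 unfolding K_def by auto
      ultimately have "K = UNIV" using ideals w0(1) by blast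
      then have fc: "f w = scale c w" for w unfolding K_def by auto
      have van: "a (v - scale c u) = 0" if "a \<in> J" for a
      proof -
        have "a v = scale c (a u)" using key[OF that] fc by simp
        then show ?thesis using J_lin[OF that] by (simp add: lin_diff lin_scale)
      qed
      have "v - scale c u \<in> span F"
      proof (rule ccontr)
        assume "v - scale c u \<notin> span F"
        then obtain a where "a \<in> Alg" "\<forall>x\<in>F. a x = 0" "a (v - scale c u) \<noteq> 0"
          using insert.IH by blast
        then show False using van unfolding J_def by auto
      qed
      then have "v \<in> span (insert u F)" using span_breakdown_eq by blast
      then show False using insert.prems by simp
    qed
  qed
qed

lemma density:
  assumes "finite S" "independent S"
  shows "\<exists>a\<in>Alg. \<forall>s\<in>S. a s = w s"
proof -
  have "\<forall>s\<in>S. \<exists>a\<in>Alg. (\<forall>x\<in>S-{s}. a x = 0) \<and> a s \<noteq> 0"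
  proof
    fix s assume "s \<in> S"
    then have "s \<notin> span (S - {s})" using assms(2) dependent_def by blast
    then show "\<exists>a\<in>Alg. (\<forall>x\<in>S-{s}. a x = 0) \<and> a s \<noteq> 0" using core assms(1) by blast
  qed
  then obtain A where A: "\<And>s. s \<in> S \<Longrightarrow> A s \<in> Alg \<and> (\<forall>x\<in>S-{s}. A s x = 0) \<and> A s s \<noteq> 0"
    by metis
  have "\<forall>s\<in>S. \<exists>b\<in>Alg. b (A s s) = w s" using A orbit by blast
  then obtain B where B: "\<And>s. s \<in> S \<Longrightarrow> B s \<in> Alg \<and> B s (A s s) = w s" by metis
  define a where "a v = (\<Sum>s\<in>S. (B s \<circ> A s) v)" for v
  have "a \<in> Alg" unfolding a_def
  proof (rule Alg_sum[OF assms(1)])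
    fix s assume "s \<in> S"
    then show "B s \<circ> A s \<in> Alg" using A B Alg_comp by blast
  qed
  moreover have "a s = w s" if "s \<in> S" for s
  proof -
    have "a s = (\<Sum>t\<in>S. if t = s then w s else 0)" unfolding a_def
    proof (rule sum.cong)
      fix t assume "t \<in> S"
      show "(B t \<circ> A t) s = (if t = s then w s else 0)"
        using A[OF \<open>t \<in> S\<close>] B[OF \<open>t \<in> S\<close>] that lin_0[OF Alg_lin] by auto
    qed simp
    then show ?thesis using that assms(1) by simp
  qed
  ultimately show ?thesis by blast
qed

theorem burnside:
  assumes "lin T" shows "\<exists>a\<in>Alg. \<forall>v. a v = T v"
proof -
  obtain B0 where B0: "finite B0" "span B0 = UNIV" using findim by auto
  obtain B where B: "independent B" "UNIV \<subseteq> span B" using basis_exists[of UNIV] by blast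
  have "finite B" using independent_span_bound[OF B0(1) B(1)] B0(2) by auto
  obtain a where a: "a \<in> Alg" "\<forall>s\<in>B. a s = T s" using density[OF \<open>finite B\<close> B(1)] by blast
  have "a v = T v" for v
    using lin_eq_span[OF Alg_lin[OF a(1)] assms, of B v] a B by auto
  then show ?thesis using a by blast
qed

end



lemma geo_sum:
  fixes z :: "'a::field"
  assumes "z ^ M = 1"
  shows "(\<Sum>j<M. z^j) = (if z = 1 then of_nat M else 0)"
  using assms by (simp add: sum_gp_strict)

locale LB = LA scale br for scale :: "'f::field_char_0 \<Rightarrow> 'g::ab_group_add \<Rightarrow> 'g" and br +
  fixes sigma :: "'n::finite \<Rightarrow> 'g \<Rightarrow> 'g" and xi :: "'n \<Rightarrow> 'f" and m :: "'n \<Rightarrow> nat"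
  assumes aut: "\<And>i. lie_aut scale br (sigma i)"
    and comm: "\<And>i j. sigma i \<circ> sigma j = sigma j \<circ> sigma i"
    and ord: "\<And>i. has_order (sigma i) (m i)"
    and prim: "\<And>i. primitive_root (xi i) (m i)"
begin

abbreviation gc where "gc \<delta> \<equiv> gcomp scale sigma xi m \<delta>"

lemma m_pos: "0 < m i" using ord unfolding has_order_def by auto
lemma sig_id: "(sigma i ^^ m i) = id" using ord unfolding has_order_def by auto
lemma xi_m: "xi i ^ m i = 1" using prim unfolding primitive_root_def by auto
lemma xi_prim: "0 < d \<Longrightarrow> d < m i \<Longrightarrow> xi i ^ d \<noteq> 1" using prim unfolding primitive_root_def by auto
lemma xi_ne0: "xi i \<noteq> 0" using xi_m[of i] m_pos[of i] by (metis power_0_left less_not_refl zero_neq_one)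

lemma lin_sig: "lin (sigma i)"
  using aut[of i] unfolding lie_aut_def module_hom_iff lin_def by auto
lemma sig_br: "sigma i (br x y) = br (sigma i x) (sigma i y)"
  using aut[of i] unfolding lie_aut_def by auto

lemma lin_funpow: "lin f \<Longrightarrow> lin (f^^j)"
proof (induction j)
  case 0 then show ?case by (simp add: lin_def)
next
  case (Suc j) then show ?case using lin_comp[of f "f^^j"] by simp
qed

lemma sig_comm': "sigma i' (sigma i w) = sigma i (sigma i' w)"
  using comm[of i' i] by (metis comp_apply)

lemma sig_comm_pow: "sigma i' ((sigma i ^^ j) w) = (sigma i ^^ j) (sigma i' w)"
  by (induction j) (auto simp: sig_comm')

lemma xi_pow_mod: "xi i ^ n = xi i ^ (n mod m i)"
proof -
  have "xi i ^ n = xi i ^ (m i * (n div m i) + n mod m i)" by simp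
  also have "\<dots> = (xi i ^ m i) ^ (n div m i) * xi i ^ (n mod m i)" by (simp only: power_add power_mult)
  finally show ?thesis by (simp add: xi_m)
qed

lemma xi_inj: assumes "a < m i" "b < m i" "xi i ^ a = xi i ^ b" shows "a = b"
proof (rule ccontr)
  assume "a \<noteq> b"
  then consider "a < b" | "b < a" by linarith
  then show False
  proof cases
    case 1
    have "xi i ^ b = xi i ^ a * xi i ^ (b - a)" using 1 by (simp add: power_add[symmetric])
    then have "xi i ^ (b - a) = 1" using assms(3) xi_ne0[of i] by simp
    then show False using xi_prim[of "b - a" i] 1 assms by simp
  next
    case 2
    have "xi i ^ a = xi i ^ b * xi i ^ (a - b)" using 2 by (simp add: power_add[symmetric])
    then have "xi i ^ (a - b) = 1" using assms(3) xi_ne0[of i] by simp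
    then show False using xi_prim[of "a - b" i] 2 assms by simp
  qed
qed

definition P :: "'n \<Rightarrow> nat \<Rightarrow> 'g \<Rightarrow> 'g" where
  "P i a w = scale (inverse (of_nat (m i))) (\<Sum>j<m i. scale ((inverse (xi i) ^ a) ^ j) ((sigma i ^^ j) w))"

lemma lin_sumf: "(\<And>j. j \<in> S \<Longrightarrow> lin (F j)) \<Longrightarrow> lin (\<lambda>v. \<Sum>j\<in>S. F j v)"
proof (induction S rule: infinite_finite_induct)
  case (infinite A) then show ?case by (simp add: lin_def)
next
  case empty then show ?case by (simp add: lin_def)
next
  case (insert x F') then show ?case by (simp add: lin_plus)
qed

lemma lin_P: "lin (P i a)"
proof -
  have "lin (\<lambda>w. \<Sum>j<m i. scale ((inverse (xi i) ^ a) ^ j) ((sigma i ^^ j) w))"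
    by (rule lin_sumf) (rule lin_smul[OF lin_funpow[OF lin_sig]])
  then show ?thesis unfolding P_def[abs_def] by (rule lin_smul)
qed

lemma eig_pow: "sigma i w = scale c w \<Longrightarrow> (sigma i ^^ j) w = scale (c^j) w"
  by (induction j) (auto simp: lin_scale[OF lin_sig] mult.commute)

lemma inv_m2: "inverse (of_nat (m i)) * of_nat (m i) = (1::'f)"
  using m_pos[of i] by simp

lemma inv_m: "scale (inverse (of_nat (m i))) (scale (of_nat (m i)) w) = w"
  using m_pos[of i] by simp

lemma P_eig:
  assumes "e < m i" "a < m i" "sigma i w = scale (xi i ^ e) w"
  shows "P i a w = (if a = e then w else 0)"
proof -
  define z where "z = inverse (xi i) ^ a * xi i ^ e"
  have "(\<Sum>j<m i. scale ((inverse (xi i) ^ a) ^ j) ((sigma i ^^ j) w))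
      = (\<Sum>j<m i. scale (z ^ j) w)"
    by (rule sum.cong) (auto simp: eig_pow[OF assms(3)] z_def power_mult_distrib power_mult[symmetric] mult.commute)
  also have "\<dots> = scale (\<Sum>j<m i. z ^ j) w" by (simp add: scale_sum_left)
  also have "(\<Sum>j<m i. z ^ j) = (if z = 1 then of_nat (m i) else 0)"
  proof (rule geo_sum)
    have "z ^ m i = (inverse (xi i ^ m i)) ^ a * (xi i ^ m i) ^ e"
      by (simp add: z_def power_mult_distrib power_mult[symmetric] mult.commute power_inverse)
    then show "z ^ m i = 1" by (simp add: xi_m)
  qed
  also have "(z = 1) \<longleftrightarrow> a = e"
  proof
    assume "z = 1"
    then have "xi i ^ e = xi i ^ a" unfolding z_def using xi_ne0[of i]
      by (simp add: power_inverse field_simps)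
    then show "a = e" using xi_inj assms by metis
  next
    assume "a = e" then show "z = 1" unfolding z_def using xi_ne0[of i]
      by (simp add: power_inverse)
  qed
  finally show ?thesis unfolding P_def by (auto simp: inv_m inv_m2)
qed

lemma P_sum: "(\<Sum>a<m i. P i a w) = w"
proof -
  have "(\<Sum>a<m i. P i a w) = scale (inverse (of_nat (m i)))
      (\<Sum>a<m i. \<Sum>j<m i. scale ((inverse (xi i) ^ j) ^ a) ((sigma i ^^ j) w))"
    unfolding P_def by (simp add: scale_sum_right power_mult[symmetric] mult.commute)
  also have "(\<Sum>a<m i. \<Sum>j<m i. scale ((inverse (xi i) ^ j) ^ a) ((sigma i ^^ j) w))
      = (\<Sum>j<m i. scale (\<Sum>a<m i. (inverse (xi i) ^ j) ^ a) ((sigma i ^^ j) w))"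
    by (subst sum.swap) (simp add: scale_sum_left)
  also have "\<dots> = (\<Sum>j<m i. if j = 0 then scale (of_nat (m i)) w else 0)"
  proof (rule sum.cong)
    fix j assume j: "j \<in> {..<m i}"
    have "(inverse (xi i) ^ j) ^ m i = 1"
      by (simp add: power_mult[symmetric] mult.commute[of j] power_mult power_inverse xi_m)
    moreover have "(inverse (xi i) ^ j = 1) \<longleftrightarrow> j = 0"
    proof
      assume "inverse (xi i) ^ j = 1"
      then have "xi i ^ j = 1" by (simp add: power_inverse)
      then show "j = 0" using xi_prim[of j i] j by (cases "j = 0") auto
    qed simp
    ultimately show "scale (\<Sum>a<m i. (inverse (xi i) ^ j) ^ a) ((sigma i ^^ j) w)
        = (if j = 0 then scale (of_nat (m i)) w else 0)"
      by (simp add: geo_sum)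
  qed simp
  also have "\<dots> = scale (of_nat (m i)) w" using m_pos[of i] by simp
  finally show ?thesis by (simp add: inv_m inv_m2)
qed

lemma P_comm: "sigma i' (P i a w) = P i a (sigma i' w)"
  unfolding P_def by (simp add: lin_scale[OF lin_sig] lin_sum[OF lin_sig] sig_comm_pow)

lemma P_eigvec: "sigma i (P i a w) = scale (xi i ^ a) (P i a w)"
proof -
  define q where "q = inverse (xi i) ^ a"
  define F where "F j = scale (q ^ j) ((sigma i ^^ j) w)" for j
  have qx: "xi i ^ a * q = 1" unfolding q_def using xi_ne0[of i] by (simp add: power_inverse)
  obtain n where n: "m i = Suc n" using m_pos[of i] by (cases "m i") auto
  have F_m: "F (m i) = F 0" unfolding F_def
    by (simp add: sig_id q_def power_mult[symmetric] mult.commute[of a] power_mult power_inverse xi_m)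
  have "sigma i (\<Sum>j<m i. F j) = (\<Sum>j<m i. scale (q ^ j) ((sigma i ^^ Suc j) w))"
    unfolding F_def by (simp add: lin_sum[OF lin_sig] lin_scale[OF lin_sig])
  also have "\<dots> = (\<Sum>j<m i. scale (xi i ^ a) (F (Suc j)))"
    unfolding F_def by (rule sum.cong) (auto simp: mult.assoc[symmetric] qx)
  also have "\<dots> = scale (xi i ^ a) (\<Sum>j<m i. F (Suc j))" by (simp add: scale_sum_right)
  also have "(\<Sum>j<m i. F (Suc j)) = (\<Sum>j<m i. F j)"
  proof -
    have "(\<Sum>j<Suc (m i). F j) = F 0 + (\<Sum>j<m i. F (Suc j))" by (rule sum.lessThan_Suc_shift)
    moreover have "(\<Sum>j<Suc (m i). F j) = (\<Sum>j<m i. F j) + F (m i)" by simp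
    ultimately show ?thesis using F_m by (simp add: add.commute)
  qed
  finally have "sigma i (\<Sum>j<m i. F j) = scale (xi i ^ a) (\<Sum>j<m i. F j)" .
  then show ?thesis unfolding P_def F_def q_def
    by (simp add: lin_scale[OF lin_sig] scale_left_commute)
qed

end



context LB begin

lemma gc_iff: "v \<in> gc \<delta> \<longleftrightarrow> (\<forall>i. sigma i v = scale (xi i ^ nat (\<delta> i mod int (m i))) v)"
  unfolding gcomp_def by simp

lemma gc_0: "0 \<in> gc \<delta>" unfolding gc_iff by (simp add: lin_0[OF lin_sig])
lemma gc_add: "x \<in> gc \<delta> \<Longrightarrow> y \<in> gc \<delta> \<Longrightarrow> x + y \<in> gc \<delta>"
  unfolding gc_iff by (simp add: lin_add[OF lin_sig] scale_right_distrib)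
lemma gc_scale: "x \<in> gc \<delta> \<Longrightarrow> scale c x \<in> gc \<delta>"
  unfolding gc_iff by (simp add: lin_scale[OF lin_sig] mult.commute)
lemma gc_sum: "(\<And>j. j \<in> S \<Longrightarrow> f j \<in> gc \<delta>) \<Longrightarrow> sum f S \<in> gc \<delta>"
  by (induction S rule: infinite_finite_induct) (auto intro: gc_0 gc_add)

lemma gc_cong: "gbar m \<delta> = gbar m \<delta>' \<Longrightarrow> gc \<delta> = gc \<delta>'"
  unfolding gcomp_def gbar_def by (simp add: fun_eq_iff)

lemma gbar_gbar: "gbar m (gbar m k) = gbar m k" unfolding gbar_def by simp
lemma gc_gbar: "gc (gbar m \<delta>) = gc \<delta>" by (rule gc_cong) (simp add: gbar_gbar)
lemma gbar_in: "gbar m k \<in> Gset m" unfolding gbar_def Gset_def using m_pos by auto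
lemma gbar_id: "r \<in> Gset m \<Longrightarrow> gbar m r = r" unfolding gbar_def Gset_def by (auto simp: fun_eq_iff)
lemma finite_Gset: "finite (Gset m)"
proof -
  have "Gset m \<subseteq> PiE UNIV (\<lambda>i. {0..<int (m i)})" unfolding Gset_def PiE_def Pi_def extensional_def
    by auto
  then show ?thesis by (rule finite_subset[OF _ finite_PiE]) auto
qed

definition E :: "'n set \<Rightarrow> 'g set" where
  "E S = {w. \<forall>i\<in>S. \<exists>e<m i. sigma i w = scale (xi i ^ e) w}"

lemma E_step:
  assumes "w \<in> E S" "a < m i0" shows "P i0 a w \<in> E (insert i0 S)"
  unfolding E_def
proof (intro CollectI ballI)
  fix i assume "i \<in> insert i0 S"
  then show "\<exists>e<m i. sigma i (P i0 a w) = scale (xi i ^ e) (P i0 a w)"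
  proof
    assume "i = i0" then show ?thesis using P_eigvec assms(2) by blast
  next
    assume "i \<in> S"
    then obtain e where e: "e < m i" "sigma i w = scale (xi i ^ e) w" using assms(1) unfolding E_def by auto
    have "sigma i (P i0 a w) = scale (xi i ^ e) (P i0 a w)"
      using P_comm[of i i0 a w] e(2) lin_scale[OF lin_P] by simp
    then show ?thesis using e(1) by blast
  qed
qed

lemma span_E: "finite S \<Longrightarrow> UNIV \<subseteq> span (E S)"
proof (induction S rule: finite_induct)
  case empty
  have "E {} = UNIV" unfolding E_def by simp
  then show ?case by simp
next
  case (insert i0 S)
  have "E S \<subseteq> span (E (insert i0 S))"
  proof
    fix w assume w: "w \<in> E S"
    have "w = (\<Sum>a<m i0. P i0 a w)" by (simp add: P_sum)
    also have "\<dots> \<in> span (E (insert i0 S))"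
      by (rule span_sum) (use E_step[OF w] in \<open>auto intro: span_base\<close>)
    finally show "w \<in> span (E (insert i0 S))" .
  qed
  then have "span (E S) \<subseteq> span (E (insert i0 S))" by (metis span_mono span_span)
  then show ?case using insert.IH by blast
qed

lemma E_gc: assumes "w \<in> E UNIV" shows "\<exists>\<delta>\<in>Gset m. w \<in> gc \<delta>"
proof -
  have "\<forall>i. \<exists>e. e < m i \<and> sigma i w = scale (xi i ^ e) w" using assms unfolding E_def by auto
  then obtain e where e: "\<And>i. e i < m i \<and> sigma i w = scale (xi i ^ e i) w" by metis
  define \<delta> where "\<delta> i = int (e i)" for i
  have "\<delta> \<in> Gset m" unfolding Gset_def \<delta>_def using e by auto
  moreover have "w \<in> gc \<delta>" unfolding gc_iff \<delta>_def
  proof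
    fix i
    have "int (e i) mod int (m i) = int (e i)" using e[of i] by simp
    then show "sigma i w = scale (xi i ^ nat (int (e i) mod int (m i))) w" using e[of i] by simp
  qed
  ultimately show ?thesis by blast
qed

lemma span_gc: "x \<in> span (\<Union>\<delta>\<in>Gset m. gc \<delta>)"
proof -
  have "E UNIV \<subseteq> (\<Union>\<delta>\<in>Gset m. gc \<delta>)" using E_gc by blast
  then have "span (E UNIV) \<subseteq> span (\<Union>\<delta>\<in>Gset m. gc \<delta>)" by (rule span_mono)
  then show ?thesis using span_E[of UNIV] by auto
qed

lemma Q_exists:
  assumes "\<beta> \<in> Gset m"
  shows "\<exists>Q. lin Q \<and> (\<forall>\<alpha> v. v \<in> gc \<alpha> \<longrightarrow> Q v = (if gbar m \<alpha> = \<beta> then v else 0))"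
proof -
  have "finite S \<Longrightarrow> \<exists>Q. lin Q \<and> (\<forall>\<alpha> v. v \<in> gc \<alpha> \<longrightarrow>
      Q v = (if (\<forall>i\<in>S. \<alpha> i mod int (m i) = \<beta> i) then v else 0))" for S
  proof (induction S rule: finite_induct)
    case empty
    show ?case by (rule exI[of _ "\<lambda>v. v"]) (simp add: lin_def)
  next
    case (insert i0 S)
    then obtain Q where Q: "lin Q" "\<And>\<alpha> v. v \<in> gc \<alpha> \<Longrightarrow>
      Q v = (if (\<forall>i\<in>S. \<alpha> i mod int (m i) = \<beta> i) then v else 0)" by blast
    define Q' where "Q' v = P i0 (nat (\<beta> i0)) (Q v)" for v
    have "lin Q'" unfolding Q'_def using lin_comp[OF lin_P Q(1)] .
    moreover have "Q' v = (if (\<forall>i\<in>insert i0 S. \<alpha> i mod int (m i) = \<beta> i) then v else 0)"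
      if v: "v \<in> gc \<alpha>" for \<alpha> v
    proof -
      have b0: "0 \<le> \<beta> i0" "\<beta> i0 < int (m i0)" using assms unfolding Gset_def by auto
      have ev: "sigma i0 v = scale (xi i0 ^ nat (\<alpha> i0 mod int (m i0))) v" using v unfolding gc_iff by auto
      have e_lt: "nat (\<alpha> i0 mod int (m i0)) < m i0" using m_pos[of i0]
        by (simp add: nat_less_iff)
      have Pv: "P i0 (nat (\<beta> i0)) v = (if \<alpha> i0 mod int (m i0) = \<beta> i0 then v else 0)"
        using P_eig[OF e_lt _ ev, of "nat (\<beta> i0)"] b0 m_pos[of i0]
        by (auto simp: nat_less_iff nat_eq_iff2)
      show ?thesis unfolding Q'_def using Q(2)[OF v] Pv lin_0[OF lin_P] by auto
    qed
    ultimately show ?case by blast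
  qed
  from this[of UNIV] obtain Q where "lin Q" "\<And>\<alpha> v. v \<in> gc \<alpha> \<Longrightarrow>
      Q v = (if (\<forall>i. \<alpha> i mod int (m i) = \<beta> i) then v else 0)" by auto
  moreover have "(\<forall>i. \<alpha> i mod int (m i) = \<beta> i) \<longleftrightarrow> gbar m \<alpha> = \<beta>" for \<alpha>
    unfolding gbar_def by (auto simp: fun_eq_iff)
  ultimately show ?thesis by auto
qed

end



context LB begin

inductive Galg :: "('n \<Rightarrow> int) \<Rightarrow> ('g \<Rightarrow> 'g) \<Rightarrow> bool" where
  G_br: "x \<in> gc s \<Longrightarrow> Galg s (br x)"
| G_plus: "Galg s a \<Longrightarrow> Galg s b \<Longrightarrow> Galg s (\<lambda>v. a v + b v)"
| G_smul: "Galg s a \<Longrightarrow> Galg s (\<lambda>v. scale c (a v))"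
| G_comp: "Galg s a \<Longrightarrow> Galg t b \<Longrightarrow> Galg (s + t) (\<lambda>v. a (b v))"

lemma Galg_lin: "Galg s a \<Longrightarrow> lin a"
proof (induction rule: Galg.induct)
  case (G_br x s) show ?case by (rule lin_br)
next
  case (G_plus s a b) then show ?case using lin_plus by blast
next
  case (G_smul s a c) then show ?case using lin_smul by blast
next
  case (G_comp s a t b) then show ?case using lin_comp by blast
qed

lemma Galg_zero: "Galg s (\<lambda>v. 0)"
proof -
  have "br 0 = (\<lambda>v. 0)" by auto
  then show ?thesis using G_br[OF gc_0[of s]] by simp
qed

lemma Galg_sum: "finite S \<Longrightarrow> (\<And>j. j \<in> S \<Longrightarrow> Galg s (F j)) \<Longrightarrow> Galg s (\<lambda>v. \<Sum>j\<in>S. F j v)"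
proof (induction S rule: finite_induct)
  case empty then show ?case using Galg_zero by simp
next
  case (insert x S)
  then have "Galg s (\<lambda>v. F x v + (\<Sum>j\<in>S. F j v))" using G_plus[of s "F x" "\<lambda>v. \<Sum>j\<in>S. F j v"] by simp
  then show ?case using insert.hyps by simp
qed

lemma xi_add: "xi i ^ nat ((x + y) mod int (m i)) = xi i ^ nat (x mod int (m i)) * xi i ^ nat (y mod int (m i))"
proof -
  define p where "p = nat (x mod int (m i))"
  define q where "q = nat (y mod int (m i))"
  have mp: "0 < int (m i)" using m_pos[of i] by simp
  have "int ((p + q) mod m i) = (x + y) mod int (m i)"
    unfolding p_def q_def using mp by (simp add: of_nat_mod mod_add_eq)
  then have "nat ((x + y) mod int (m i)) = (p + q) mod m i" by linarith
  then have "xi i ^ nat ((x + y) mod int (m i)) = xi i ^ (p + q)" using xi_pow_mod[of i "p+q"] by simp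
  then show ?thesis unfolding p_def q_def by (simp add: power_add)
qed

lemma Galg_hom: "Galg s a \<Longrightarrow> v \<in> gc \<alpha> \<Longrightarrow> a v \<in> gc (\<alpha> + s)"
proof (induction arbitrary: \<alpha> v rule: Galg.induct)
  case (G_br x s)
  show ?case unfolding gc_iff
  proof
    fix i
    have "sigma i (br x v) = br (sigma i x) (sigma i v)" by (rule sig_br)
    also have "\<dots> = scale (xi i ^ nat (s i mod int (m i)) * xi i ^ nat (\<alpha> i mod int (m i))) (br x v)"
      using G_br unfolding gc_iff by (simp add: br_scale_l br_scale_r)
    finally show "sigma i (br x v) = scale (xi i ^ nat ((\<alpha> + s) i mod int (m i))) (br x v)"
      by (simp add: xi_add mult.commute)
  qed
next
  case (G_plus s a b) then show ?case by (simp add: gc_add)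
next
  case (G_smul s a c) then show ?case by (simp add: gc_scale)
next
  case (G_comp s a t b)
  have "b v \<in> gc (\<alpha> + t)" by (rule G_comp.IH(2)[OF G_comp.prems])
  then have "a (b v) \<in> gc (\<alpha> + t + s)" by (rule G_comp.IH(1))
  moreover have "\<alpha> + t + s = \<alpha> + (s + t)" by (simp add: add_ac)
  ultimately show ?case by (simp only:)
qed

lemma gbar_add_left: "gbar m (gbar m x + y) = gbar m (x + y)"
  unfolding gbar_def by (simp add: fun_eq_iff mod_add_left_eq)
lemma gbar_add_right: "gbar m (x + gbar m y) = gbar m (x + y)"
  unfolding gbar_def by (simp add: fun_eq_iff mod_add_right_eq)
lemma gbar_diff_left: "gbar m (gbar m x - y) = gbar m (x - y)"
  unfolding gbar_def by (simp add: fun_eq_iff mod_diff_left_eq)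

lemma gbar_cancel:
  assumes "\<delta> \<in> Gset m" "\<delta>' \<in> Gset m" "gbar m (b + \<delta>) = gbar m (b + \<delta>')"
  shows "\<delta> = \<delta>'"
proof -
  have "gbar m (gbar m (b + \<delta>) - b) = gbar m (gbar m (b + \<delta>') - b)" using assms(3) by simp
  then have "gbar m \<delta> = gbar m \<delta>'" by (simp add: gbar_diff_left)
  then show ?thesis using gbar_id assms(1,2) by metis
qed

definition Dec :: "('g \<Rightarrow> 'g) \<Rightarrow> bool" where
  "Dec a \<longleftrightarrow> (\<exists>h. (\<forall>\<delta>\<in>Gset m. \<forall>s. gbar m s = \<delta> \<longrightarrow> Galg s (h \<delta>)) \<and> (\<forall>v. a v = (\<Sum>\<delta>\<in>Gset m. h \<delta> v)))"

lemma Dec_plus: assumes "Dec a" "Dec b" shows "Dec (\<lambda>v. a v + b v)"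
proof -
  obtain h1 where h1: "\<forall>\<delta>\<in>Gset m. \<forall>s. gbar m s = \<delta> \<longrightarrow> Galg s (h1 \<delta>)" "\<forall>v. a v = (\<Sum>\<delta>\<in>Gset m. h1 \<delta> v)"
    using assms(1) unfolding Dec_def by blast
  obtain h2 where h2: "\<forall>\<delta>\<in>Gset m. \<forall>s. gbar m s = \<delta> \<longrightarrow> Galg s (h2 \<delta>)" "\<forall>v. b v = (\<Sum>\<delta>\<in>Gset m. h2 \<delta> v)"
    using assms(2) unfolding Dec_def by blast
  show ?thesis unfolding Dec_def
    by (rule exI[of _ "\<lambda>\<delta> v. h1 \<delta> v + h2 \<delta> v"]) (use h1 h2 in \<open>auto intro: G_plus simp: sum.distrib\<close>)
qed

lemma Dec_smul: assumes "Dec a" shows "Dec (\<lambda>v. scale c (a v))"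
proof -
  obtain h1 where h1: "\<forall>\<delta>\<in>Gset m. \<forall>s. gbar m s = \<delta> \<longrightarrow> Galg s (h1 \<delta>)" "\<forall>v. a v = (\<Sum>\<delta>\<in>Gset m. h1 \<delta> v)"
    using assms(1) unfolding Dec_def by blast
  show ?thesis unfolding Dec_def
    by (rule exI[of _ "\<lambda>\<delta> v. scale c (h1 \<delta> v)"]) (use h1 in \<open>auto intro: G_smul simp: scale_sum_right\<close>)
qed

lemma Dec_br: "Dec (br x)"
proof -
  have "x \<in> span (\<Union>\<delta>\<in>Gset m. gc \<delta>)" by (rule span_gc)
  then show ?thesis
  proof (induction rule: span_induct)
    case base
    show ?case unfolding subspace_def
    proof (intro conjI allI impI ballI)
      have "br 0 = (\<lambda>v. \<Sum>\<delta>\<in>Gset m. (\<lambda>\<delta> v. 0) \<delta> v)" by auto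
      then show "0 \<in> {x. Dec (br x)}" unfolding Dec_def using Galg_zero by fastforce
    next
      fix x y assume "x \<in> {x. Dec (br x)}" "y \<in> {x. Dec (br x)}"
      then have "Dec (\<lambda>v. br x v + br y v)" using Dec_plus[of "br x" "br y"] by simp
      moreover have "br (x + y) = (\<lambda>v. br x v + br y v)" by (simp add: br_add_l fun_eq_iff)
      ultimately show "x + y \<in> {x. Dec (br x)}" by simp
    next
      fix c x assume "x \<in> {x. Dec (br x)}"
      then have "Dec (\<lambda>v. scale c (br x v))" using Dec_smul[of "br x"] by simp
      moreover have "br (scale c x) = (\<lambda>v. scale c (br x v))" by (simp add: br_scale_l fun_eq_iff)
      ultimately show "scale c x \<in> {x. Dec (br x)}" by simp
    qed
  next
    case (step x)
    then obtain \<delta>0 where d0: "\<delta>0 \<in> Gset m" "x \<in> gc \<delta>0" by blast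
    define h where "h \<delta> = (\<lambda>v. if \<delta> = \<delta>0 then br x v else 0)" for \<delta>
    have "\<forall>\<delta>\<in>Gset m. \<forall>s. gbar m s = \<delta> \<longrightarrow> Galg s (h \<delta>)"
    proof (intro ballI allI impI)
      fix \<delta> s assume "\<delta> \<in> Gset m" "gbar m s = \<delta>"
      show "Galg s (h \<delta>)"
      proof (cases "\<delta> = \<delta>0")
        case True
        have "x \<in> gc s" using d0 \<open>gbar m s = \<delta>\<close> True gc_gbar[of s] by simp
        then have "Galg s (br x)" by (rule G_br)
        moreover have "h \<delta> = br x" using True unfolding h_def by (simp add: fun_eq_iff)
        ultimately show ?thesis by simp
      next
        case False
        then have "h \<delta> = (\<lambda>v. 0)" unfolding h_def by simp
        then show ?thesis using Galg_zero by simp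
      qed
    qed
    moreover have "br x v = (\<Sum>\<delta>\<in>Gset m. h \<delta> v)" for v
      unfolding h_def using d0(1) finite_Gset by (simp add: if_distrib cong: if_cong)
    ultimately show ?case unfolding Dec_def by blast
  qed
qed

lemma Dec_comp: assumes "Dec a" "Dec b" shows "Dec (\<lambda>v. a (b v))"
proof -
  obtain h1 where h1: "\<forall>\<delta>\<in>Gset m. \<forall>s. gbar m s = \<delta> \<longrightarrow> Galg s (h1 \<delta>)" "\<forall>v. a v = (\<Sum>\<delta>\<in>Gset m. h1 \<delta> v)"
    using assms(1) unfolding Dec_def by blast
  obtain h2 where h2: "\<forall>\<delta>\<in>Gset m. \<forall>s. gbar m s = \<delta> \<longrightarrow> Galg s (h2 \<delta>)" "\<forall>v. b v = (\<Sum>\<delta>\<in>Gset m. h2 \<delta> v)"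
    using assms(2) unfolding Dec_def by blast
  have lin1: "lin (h1 \<delta>)" if "\<delta> \<in> Gset m" for \<delta>
    using h1(1) that gbar_id Galg_lin by blast
  define h where "h \<delta> = (\<lambda>v. \<Sum>\<delta>1\<in>Gset m. h1 \<delta>1 (h2 (gbar m (\<delta> - \<delta>1)) v))" for \<delta>
  have "\<forall>\<delta>\<in>Gset m. \<forall>s. gbar m s = \<delta> \<longrightarrow> Galg s (h \<delta>)"
  proof (intro ballI allI impI)
    fix \<delta> s assume d: "\<delta> \<in> Gset m" "gbar m s = \<delta>"
    show "Galg s (h \<delta>)" unfolding h_def
    proof (rule Galg_sum[OF finite_Gset])
      fix \<delta>1 assume d1: "\<delta>1 \<in> Gset m"
      have g1: "Galg \<delta>1 (h1 \<delta>1)" using h1(1) d1 gbar_id by blast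
      have "gbar m (s - \<delta>1) = gbar m (\<delta> - \<delta>1)" using d(2) gbar_diff_left by metis
      then have g2: "Galg (s - \<delta>1) (h2 (gbar m (\<delta> - \<delta>1)))" using h2(1) gbar_in by metis
      have "Galg (\<delta>1 + (s - \<delta>1)) (\<lambda>v. h1 \<delta>1 (h2 (gbar m (\<delta> - \<delta>1)) v))" by (rule G_comp[OF g1 g2])
      then show "Galg s (\<lambda>v. h1 \<delta>1 (h2 (gbar m (\<delta> - \<delta>1)) v))" by simp
    qed
  qed
  moreover have "a (b v) = (\<Sum>\<delta>\<in>Gset m. h \<delta> v)" for v
  proof -
    have "(\<Sum>\<delta>\<in>Gset m. h \<delta> v) = (\<Sum>\<delta>1\<in>Gset m. \<Sum>\<delta>\<in>Gset m. h1 \<delta>1 (h2 (gbar m (\<delta> - \<delta>1)) v))"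
      unfolding h_def by (rule sum.swap)
    also have "\<dots> = (\<Sum>\<delta>1\<in>Gset m. \<Sum>\<delta>2\<in>Gset m. h1 \<delta>1 (h2 \<delta>2 v))"
    proof (rule sum.cong[OF refl])
      fix \<delta>1 assume d1: "\<delta>1 \<in> Gset m"
      show "(\<Sum>\<delta>\<in>Gset m. h1 \<delta>1 (h2 (gbar m (\<delta> - \<delta>1)) v)) = (\<Sum>\<delta>2\<in>Gset m. h1 \<delta>1 (h2 \<delta>2 v))"
      proof (rule sum.reindex_bij_witness[where i="\<lambda>\<delta>2. gbar m (\<delta>2 + \<delta>1)" and j="\<lambda>\<delta>. gbar m (\<delta> - \<delta>1)"])
        fix \<delta> assume "\<delta> \<in> Gset m"
        then show "gbar m (gbar m (\<delta> - \<delta>1) + \<delta>1) = \<delta>" by (simp add: gbar_add_left gbar_id)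
        show "gbar m (\<delta> - \<delta>1) \<in> Gset m" by (rule gbar_in)
      next
        fix \<delta>2 assume "\<delta>2 \<in> Gset m"
        then show "gbar m (gbar m (\<delta>2 + \<delta>1) - \<delta>1) = \<delta>2" by (simp add: gbar_diff_left gbar_id)
        show "gbar m (\<delta>2 + \<delta>1) \<in> Gset m" by (rule gbar_in)
      qed simp
    qed
    also have "\<dots> = (\<Sum>\<delta>1\<in>Gset m. h1 \<delta>1 (b v))"
      using h2(2) lin1 by (simp add: lin_sum)
    also have "\<dots> = a (b v)" using h1(2) by simp
    finally show ?thesis by simp
  qed
  ultimately show ?thesis unfolding Dec_def by blast
qed

lemma Dec_Alg: "a \<in> Alg \<Longrightarrow> Dec a"
proof (induction rule: Alg.induct)
  case (Alg_br x) show ?case by (rule Dec_br)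
next
  case (Alg_plus a b) then show ?case using Dec_plus by blast
next
  case (Alg_smul a c) then show ?case using Dec_smul by blast
next
  case (Alg_comp a b) then show ?case unfolding comp_def using Dec_comp by blast
qed

end



definition shiftop :: "('g::ab_group_add \<Rightarrow> 'g) \<Rightarrow> ('n \<Rightarrow> int) \<Rightarrow> (('n \<Rightarrow> int) \<Rightarrow>\<^sub>0 'g) \<Rightarrow> ('n \<Rightarrow> int) \<Rightarrow>\<^sub>0 'g" where
  "shiftop \<phi> s Y = Abs_poly_mapping (\<lambda>k. \<phi> (Poly_Mapping.lookup Y (k - s)))"

lemma lookup_shiftop:
  assumes "\<phi> 0 = 0"
  shows "Poly_Mapping.lookup (shiftop \<phi> s Y) k = \<phi> (Poly_Mapping.lookup Y (k - s))"
proof -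
  have "{k. \<phi> (Poly_Mapping.lookup Y (k - s)) \<noteq> 0} \<subseteq> (\<lambda>b. b + s) ` Poly_Mapping.keys Y"
  proof
    fix k assume "k \<in> {k. \<phi> (Poly_Mapping.lookup Y (k - s)) \<noteq> 0}"
    then have "Poly_Mapping.lookup Y (k - s) \<noteq> 0" using assms by auto
    then have "k - s \<in> Poly_Mapping.keys Y" by (simp add: in_keys_iff)
    moreover have "k = (k - s) + s" by simp
    ultimately show "k \<in> (\<lambda>b. b + s) ` Poly_Mapping.keys Y" by blast
  qed
  then have "finite {k. \<phi> (Poly_Mapping.lookup Y (k - s)) \<noteq> 0}" by (rule finite_subset) simp
  then show ?thesis unfolding shiftop_def by simp
qed

lemma lookup_tpow_mult:
  fixes P :: "('n \<Rightarrow> int) \<Rightarrow>\<^sub>0 'f::field"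
  shows "Poly_Mapping.lookup (tpow a * P) c = Poly_Mapping.lookup P (c - a)"
proof -
  have "Poly_Mapping.lookup (tpow a * P) c = (\<Sum>l. (1 when a = l) * (\<Sum>q. Poly_Mapping.lookup P q when c = l + q))"
    unfolding tpow_def lookup_mult lookup_single ..
  also have "\<dots> = (\<Sum>l. if a = l then (\<Sum>q. Poly_Mapping.lookup P q when c = l + q) else 0)"
    by (rule Sum_any.cong) (simp add: when_def)
  also have "\<dots> = (\<Sum>q. Poly_Mapping.lookup P q when c = a + q)" by simp
  also have "\<dots> = (\<Sum>q. if c - a = q then Poly_Mapping.lookup P q else 0)"
    by (rule Sum_any.cong) (auto simp: when_def)
  also have "\<dots> = Poly_Mapping.lookup P (c - a)" by simp
  finally show ?thesis .
qed

locale LD = LB scale br sigma xi m for scale :: "'f::field_char_0 \<Rightarrow> 'g::ab_group_add \<Rightarrow> 'g"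
  and br and sigma :: "'n::finite \<Rightarrow> 'g \<Rightarrow> 'g" and xi m +
  fixes I :: "(('n \<Rightarrow> int) \<Rightarrow>\<^sub>0 'g) set"
  assumes I: "loop_ideal scale br sigma xi m I"
begin

lemma I_L: "I \<subseteq> multiloop scale sigma xi m" using I unfolding loop_ideal_def by auto
lemma I_add: "X \<in> I \<Longrightarrow> Y \<in> I \<Longrightarrow> X + Y \<in> I" using I unfolding loop_ideal_def by auto
lemma I_smul: "X \<in> I \<Longrightarrow> lsmul scale c X \<in> I" using I unfolding loop_ideal_def by auto
lemma I_br: "X \<in> multiloop scale sigma xi m \<Longrightarrow> Y \<in> I \<Longrightarrow> lbr br X Y \<in> I"
  using I unfolding loop_ideal_def by auto

lemma single_L: "x \<in> gc s \<Longrightarrow> Poly_Mapping.single s x \<in> multiloop scale sigma xi m"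
  unfolding multiloop_def by (auto simp: lookup_single when_def gc_0)

lemma lbr_single: "lbr br (Poly_Mapping.single s x) Y = shiftop (br x) s Y"
proof (cases "x = 0")
  case True
  have "br 0 = (\<lambda>v. 0)" by auto
  then show ?thesis using True
    by (intro poly_mapping_eqI) (simp add: lbr_def lookup_shiftop)
next
  case False
  show ?thesis
  proof (rule poly_mapping_eqI)
    fix k
    have "Poly_Mapping.lookup (lbr br (Poly_Mapping.single s x) Y) k
        = (\<Sum>b\<in>Poly_Mapping.keys Y. if s + b = k then br x (Poly_Mapping.lookup Y b) else 0)"
      using False unfolding lbr_def
      by (auto simp: lookup_sum lookup_single when_def intro!: sum.cong)
    also have "\<dots> = (\<Sum>b\<in>Poly_Mapping.keys Y. if b = k - s then br x (Poly_Mapping.lookup Y b) else 0)"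
      by (rule sum.cong) (auto simp: algebra_simps)
    also have "\<dots> = br x (Poly_Mapping.lookup Y (k - s))"
      by (auto simp: in_keys_iff)
    finally show "Poly_Mapping.lookup (lbr br (Poly_Mapping.single s x) Y) k = Poly_Mapping.lookup (shiftop (br x) s Y) k"
      by (simp add: lookup_shiftop)
  qed
qed

lemma Galg_ideal: "Galg s \<phi> \<Longrightarrow> Y \<in> I \<Longrightarrow> shiftop \<phi> s Y \<in> I"
proof (induction arbitrary: Y rule: Galg.induct)
  case (G_br x s)
  then show ?case using I_br[OF single_L[OF G_br(1)]] lbr_single by metis
next
  case (G_plus s a b)
  have a0: "a 0 = 0" using lin_0[OF Galg_lin[OF G_plus.hyps(1)]] .
  have b0: "b 0 = 0" using lin_0[OF Galg_lin[OF G_plus.hyps(2)]] .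
  have "shiftop (\<lambda>v. a v + b v) s Y = shiftop a s Y + shiftop b s Y"
    by (rule poly_mapping_eqI) (simp add: lookup_shiftop a0 b0 lookup_add)
  then show ?case using I_add G_plus.IH G_plus.prems by simp
next
  case (G_smul s a c)
  have a0: "a 0 = 0" using lin_0[OF Galg_lin[OF G_smul.hyps(1)]] .
  have "shiftop (\<lambda>v. scale c (a v)) s Y = lsmul scale c (shiftop a s Y)"
    by (rule poly_mapping_eqI) (simp add: lookup_shiftop a0 lsmul_def map.rep_eq when_def)
  then show ?case using I_smul G_smul.IH G_smul.prems by simp
next
  case (G_comp s a t b)
  have a0: "a 0 = 0" using lin_0[OF Galg_lin[OF G_comp.hyps(1)]] .
  have b0: "b 0 = 0" using lin_0[OF Galg_lin[OF G_comp.hyps(2)]] .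
  have "shiftop (\<lambda>v. a (b v)) (s + t) Y = shiftop a s (shiftop b t Y)"
    by (rule poly_mapping_eqI) (simp add: lookup_shiftop a0 b0 diff_diff_eq add.commute)
  moreover have "shiftop a s (shiftop b t Y) \<in> I" using G_comp.IH G_comp.prems by blast
  ultimately show ?case by metis
qed

end



context LD begin

lemma main:
  assumes basis: "\<And>r. r \<in> Gset m \<Longrightarrow>
        inj_on (xb r) {..<d r}
        \<and> \<not> dependent (xb r ` {..<d r})
        \<and> span (xb r ` {..<d r}) = gc r"
    and Y: "Y \<in> I" and i: "i < d (gbar m k)" and j: "j < d (gbar m l)"
  shows "tens scale (xb (gbar m k) i) (tpow (k - l) * proj scale m xb d (gbar m l) j Y) \<in> I"
proof -
  define r where "r = gbar m l"
  define kr where "kr = gbar m k"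
  define Br where "Br = xb r ` {..<d r}"
  define xk where "xk = xb kr i"
  define rep where "rep v = representation Br v (xb r j)" for v
  have r_in: "r \<in> Gset m" unfolding r_def by (rule gbar_in)
  have Br: "independent Br" "span Br = gc r" using basis[OF r_in] unfolding Br_def by auto
  have rep0: "rep 0 = 0" unfolding rep_def by (simp add: representation_zero)
  have xk_in: "xk \<in> gc k"
  proof -
    have "xk \<in> span (xb kr ` {..<d kr})" unfolding xk_def using i kr_def by (auto intro: span_base)
    also have "\<dots> = gc kr" using basis[OF gbar_in[of k]] kr_def by auto
    finally show ?thesis unfolding kr_def gc_gbar .
  qed
  obtain Q where Q: "lin Q" "\<And>\<alpha> v. v \<in> gc \<alpha> \<Longrightarrow> Q v = (if gbar m \<alpha> = r then v else 0)"
    using Q_exists[OF r_in] by blast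
  have Qin: "Q v \<in> gc r" for v
  proof -
    have "v \<in> span (\<Union>\<delta>\<in>Gset m. gc \<delta>)" by (rule span_gc)
    then show ?thesis
    proof (induction rule: span_induct)
      case base
      show ?case unfolding subspace_def
        by (auto simp: lin_0[OF Q(1)] lin_add[OF Q(1)] lin_scale[OF Q(1)] gc_0 gc_add gc_scale)
    next
      case (step x)
      then obtain \<alpha> where "\<alpha> \<in> Gset m" "x \<in> gc \<alpha>" by blast
      then show ?case using Q(2)[of x \<alpha>] gc_0 gc_gbar[of \<alpha>] by auto
    qed
  qed
  define T where "T v = scale (rep (Q v)) xk" for v
  have "lin T" unfolding lin_def
  proof safe
    fix x y
    have "rep (Q x + Q y) = rep (Q x) + rep (Q y)" unfolding rep_def
      using representation_add[OF Br(1), of "Q y" "Q x"] Qin Br(2) by simp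
    then show "T (x + y) = T x + T y" unfolding T_def
      by (simp add: lin_add[OF Q(1)] scale_left_distrib)
  next
    fix c x
    have "rep (scale c (Q x)) = c * rep (Q x)" unfolding rep_def
      using representation_scale[OF Br(1), of "Q x" c] Qin Br(2) by simp
    then show "T (scale c x) = scale c (T x)" unfolding T_def
      by (simp add: lin_scale[OF Q(1)])
  qed
  obtain \<phi> where \<phi>: "\<phi> \<in> Alg" "\<And>v. \<phi> v = T v" using burnside[OF \<open>lin T\<close>] by blast
  obtain h where h: "\<forall>\<delta>\<in>Gset m. \<forall>s. gbar m s = \<delta> \<longrightarrow> Galg s (h \<delta>)" "\<forall>v. \<phi> v = (\<Sum>\<delta>\<in>Gset m. h \<delta> v)"
    using Dec_Alg[OF \<phi>(1)] unfolding Dec_def by blast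
  define \<delta>0 where "\<delta>0 = gbar m (k - l)"
  have d0: "\<delta>0 \<in> Gset m" unfolding \<delta>0_def by (rule gbar_in)
  have Gd0: "Galg (k - l) (h \<delta>0)" using h(1) d0 \<delta>0_def by blast
  have YL: "Poly_Mapping.lookup Y b \<in> gc b" for b using Y I_L unfolding multiloop_def by auto
  have TQ: "T (Poly_Mapping.lookup Y b) = (if gbar m b = r then scale (rep (Poly_Mapping.lookup Y b)) xk else 0)" for b
    unfolding T_def using Q(2)[OF YL[of b]] rep0 by auto
  have key: "h \<delta>0 (Poly_Mapping.lookup Y b) = T (Poly_Mapping.lookup Y b)" for b
  proof -
    define v where "v = Poly_Mapping.lookup Y b"
    have v: "v \<in> gc b" unfolding v_def by (rule YL)
    define \<gamma> where "\<gamma> = gbar m (b + (k - l))"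
    obtain Qg where Qg: "lin Qg" "\<And>\<alpha> v. v \<in> gc \<alpha> \<Longrightarrow> Qg v = (if gbar m \<alpha> = \<gamma> then v else 0)"
      using Q_exists[OF gbar_in[of "b + (k - l)"]] unfolding \<gamma>_def by blast
    have hin: "h \<delta> v \<in> gc (b + \<delta>)" if "\<delta> \<in> Gset m" for \<delta>
      using Galg_hom[OF _ v] h(1) that gbar_id by blast
    have geq: "gbar m (b + \<delta>) = \<gamma> \<longleftrightarrow> \<delta> = \<delta>0" if "\<delta> \<in> Gset m" for \<delta>
    proof -
      have "\<gamma> = gbar m (b + \<delta>0)" unfolding \<gamma>_def \<delta>0_def by (simp add: gbar_add_right)
      then show ?thesis using gbar_cancel[OF that d0] by auto
    qed
    have "Qg (\<phi> v) = (\<Sum>\<delta>\<in>Gset m. Qg (h \<delta> v))" using h(2) lin_sum[OF Qg(1)] by simp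
    also have "\<dots> = (\<Sum>\<delta>\<in>Gset m. if \<delta> = \<delta>0 then h \<delta> v else 0)"
      by (rule sum.cong) (use Qg(2)[OF hin] geq in auto)
    also have "\<dots> = h \<delta>0 v" using d0 finite_Gset by simp
    finally have 1: "Qg (\<phi> v) = h \<delta>0 v" .
    have "T v \<in> gc (b + (k - l))"
    proof (cases "gbar m b = r")
      case True
      have "gbar m (b + (k - l)) = gbar m k"
        by (metis True r_def gbar_add_left add_diff_cancel_left'[of l] add_diff_eq)
      then have "gc (b + (k - l)) = gc k" by (rule gc_cong)
      then show ?thesis using TQ[of b] True xk_in gc_scale unfolding v_def by simp
    next
      case False
      then show ?thesis using TQ[of b] gc_0 unfolding v_def by simp
    qed
    then have "Qg (T v) = T v" using Qg(2) \<gamma>_def by simp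
    then show ?thesis using 1 \<phi>(2) unfolding v_def by simp
  qed
  have "shiftop (h \<delta>0) (k - l) Y \<in> I" by (rule Galg_ideal[OF Gd0 Y])
  moreover have "tens scale (xb (gbar m k) i) (tpow (k - l) * proj scale m xb d (gbar m l) j Y)
      = shiftop (h \<delta>0) (k - l) Y"
  proof (rule poly_mapping_eqI)
    fix c
    define b where "b = c - (k - l)"
    have h0: "h \<delta>0 0 = 0" using lin_0[OF Galg_lin[OF Gd0]] .
    have pr: "Poly_Mapping.lookup (proj scale m xb d r j Y) b'
        = (if gbar m b' = r then rep (Poly_Mapping.lookup Y b') else 0)" for b'
      unfolding proj_def lookup_mapp rep_def Br_def
      by (auto simp: when_def in_keys_iff representation_zero)
    have "Poly_Mapping.lookup (tens scale xk (tpow (k - l) * proj scale m xb d r j Y)) c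
        = scale (Poly_Mapping.lookup (proj scale m xb d r j Y) b) xk"
      unfolding tens_def b_def by (simp add: map.rep_eq when_def lookup_tpow_mult)
    also have "\<dots> = T (Poly_Mapping.lookup Y b)" using TQ[of b] pr[of b] by simp
    also have "\<dots> = Poly_Mapping.lookup (shiftop (h \<delta>0) (k - l) Y) c"
      using key[of b] by (simp add: lookup_shiftop h0 b_def)
    finally show "Poly_Mapping.lookup (tens scale (xb (gbar m k) i) (tpow (k - l) * proj scale m xb d (gbar m l) j Y)) c
        = Poly_Mapping.lookup (shiftop (h \<delta>0) (k - l) Y) c"
      unfolding xk_def kr_def r_def .
  qed
  ultimately show ?thesis by simp
qed

end

theorem lemma2p2:
  fixes scale :: "'f::field_char_0 \<Rightarrow> 'g::ab_group_add \<Rightarrow> 'g"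
    and br :: "'g \<Rightarrow> 'g \<Rightarrow> 'g"
    and sigma :: "'n::finite \<Rightarrow> 'g \<Rightarrow> 'g"
    and m :: "'n \<Rightarrow> nat"
    and xi :: "'n \<Rightarrow> 'f"
    and xb :: "('n \<Rightarrow> int) \<Rightarrow> nat \<Rightarrow> 'g"
    and d :: "('n \<Rightarrow> int) \<Rightarrow> nat"
    and I :: "(('n \<Rightarrow> int) \<Rightarrow>\<^sub>0 'g) set"
    and Y :: "('n \<Rightarrow> int) \<Rightarrow>\<^sub>0 'g"
  assumes F: "alg_closed TYPE('f)"
    and g: "simple_lie_algebra scale br"
    and aut: "\<And>i. lie_aut scale br (sigma i)"
    and comm: "\<And>i j. sigma i \<circ> sigma j = sigma j \<circ> sigma i"
    and ord: "\<And>i. has_order (sigma i) (m i)"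
    and prim: "\<And>i. primitive_root (xi i) (m i)"
    and basis: "\<And>r. r \<in> Gset m \<Longrightarrow>
        inj_on (xb r) {..<d r}
        \<and> \<not> module.dependent scale (xb r ` {..<d r})
        \<and> module.span scale (xb r ` {..<d r}) = gcomp scale sigma xi m r"
    and I: "loop_ideal scale br sigma xi m I"
    and Y: "Y \<in> I"
  shows "\<forall>k l i j. i < d (gbar m k) \<longrightarrow> j < d (gbar m l) \<longrightarrow>
     tens scale (xb (gbar m k) i) (tpow (k - l) * proj scale m xb d (gbar m l) j Y) \<in> I"
proof -
  have vs: "vector_space scale" using g unfolding simple_lie_algebra_def lie_algebra_def by auto
  interpret L: LD scale br sigma xi m I
    unfolding LD_def LB_def LA_def LD_axioms_def LB_axioms_def LA_axioms_def
    using vs F g aut comm ord prim I by blast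
  show ?thesis using L.main[OF basis Y] by blast
qed


end
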